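(* Let $\Sigma$ be a non-orientable surface (possibly with boundary), let $D\subset\Sigma$ be a diagram of an oriented pseudo-classical knot in $\hat\Sigma=\Sigma\times[0,1]$, fix a labeling of its $2$-cabling $D^2$, and let $x$ be a crossing of $D$. (1) If $x$ is of type $1$, then each of the following transformations multiplies $\operatorname{sign}(x)$ by $-1$: (a) the crossing change operation at $x$; (b) reversing the orientation of $D$; (c) relabeling $D^2$. (2) If $x$ is of type $2$, then $\operatorname{sign}(x)$ is preserved under the crossing change operation at $x$, while relabeling $D^2$ and reversing the orientation of $D$ each multiply $\operatorname{sign}(x)$ by $-1$.
   Context: $\hat\Sigma=\Sigma\times[0,1]$ is the non-orientable $3$-manifold with fixed product structure; knots in it are represented by diagrams on $\Sigma$ (projections with over/under information at double points). A knot $K\subset\hat\Sigma$ is pseudo-classical if it is an orientation-preserving loop in $\hat\Sigma$ (equivalently its regular neighbourhood is a solid torus); then its diagram $D$ is an orientation-preserving loop in $\Sigma$. The $2$-cabling $D^2$ is the diagram obtained by replacing $D$ by two parallel copies (a doubled line) preserving over/under information at all crossings; for pseudo-classical $K$ it has two components. A labeling of $D^2$ is a choice of calling one component the "right" one $R(D)$ and the other the "left" one $L(D)$ (this is only a naming, since $\Sigma$ has no orientation); relabeling swaps the names. Both components are oriented consistently with $D$. Each crossing $x$ of $D$ gives a pattern of $4$ crossings of $D^2$; the input crossing $\mathrm{In}(x)$ is the crossing of the pattern at which both strands of $D^2$ passing through it enter the pattern (the first crossing of the pattern on both strands, traversed in the positive direction); the output crossing is defined analogously with "leave". The sign of $x$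 is $\operatorname{sign}(x)=1$ if $R(D)$ goes over $L(D)$ at $\mathrm{In}(x)$; $-1$ if $L(D)$ goes over $R(D)$ at $\mathrm{In}(x)$; $i$ if $R(D)$ goes over itself at $\mathrm{In}(x)$; $-i$ if $L(D)$ goes over itself at $\mathrm{In}(x)$ ($i$ the imaginary unit). The crossing $x$ is of type $1$ if $\mathrm{In}(x)$ is an intersection of two distinct components of $D^2$ (i.e. $\operatorname{sign}(x)=\pm1$), and of type $2$ otherwise ($\operatorname{sign}(x)=\pm i$). The crossing change at $x$ swaps over- and under-branches at $x$ leaving the rest of the diagram unchanged. *)

theory Defs
  imports Complex_Main
begin

text \<open>Local model of a crossing x of an oriented pseudo-classical diagram D on a
(non-orientable) surface, together with the 2-cabling D^2 and a labeling of it.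
We work in a small disk chart around x, identified with the complex plane
(with an arbitrarily chosen local orientation; no global orientation exists).
The two branches of D through x are straight lines through 0 with direction
vectors dir1, dir2 (the orientation of D), transversal to each other.
The doubled line of branch k consists of the two parallel strands
  t \<mapsto> o + t * dir_k  with offset o = +/- width * i * dir_k.
The labeling of D^2 is recorded by giving, for each branch, the offset of the
strand belonging to the right component R(D); the other strand belongs to L(D).
over1 says whether branch 1 is the over-branch at x (then both strands of
branch 1 go over both strands of branch 2 in the pattern of 4 crossings).\<close>

record xdata =
  dir1 :: complex
  dir2 :: complex
  width :: real
  over1 :: bool
  roff1 :: complex
  roff2 :: complex

definition offs1 :: "xdata \<Rightarrow> complex set" where
  "offs1 d = {complex_of_real (width d) * \<i> * dir1 d, - (complex_of_real (width d) * \<i> * dir1 d)}"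

definition offs2 :: "xdata \<Rightarrow> complex set" where
  "offs2 d = {complex_of_real (width d) * \<i> * dir2 d, - (complex_of_real (width d) * \<i> * dir2 d)}"

definition valid :: "xdata \<Rightarrow> bool" where
  "valid d \<longleftrightarrow> width d > 0 \<and> Im (cnj (dir1 d) * dir2 d) \<noteq> 0
     \<and> roff1 d \<in> offs1 d \<and> roff2 d \<in> offs2 d"

definition meets :: "xdata \<Rightarrow> complex \<Rightarrow> complex \<Rightarrow> real \<Rightarrow> real \<Rightarrow> bool" where
  "meets d o1 o2 t1 t2 \<longleftrightarrow> o1 + complex_of_real t1 * dir1 d = o2 + complex_of_real t2 * dir2 d"

text \<open>The input crossing In(x): the crossing of the pattern which is the first
crossing of the pattern on both strands passing through it (traversed positively).\<close>
definition is_input :: "xdata \<Rightarrow> complex \<Rightarrow> complex \<Rightarrow> bool" where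
  "is_input d o1 o2 \<longleftrightarrow> o1 \<in> offs1 d \<and> o2 \<in> offs2 d \<and>
     (\<exists>t1 t2. meets d o1 o2 t1 t2 \<and>
        (\<forall>o2'\<in>offs2 d. \<forall>s1 s2. meets d o1 o2' s1 s2 \<longrightarrow> t1 \<le> s1) \<and>
        (\<forall>o1'\<in>offs1 d. \<forall>s1 s2. meets d o1' o2 s1 s2 \<longrightarrow> t2 \<le> s2))"

definition In :: "xdata \<Rightarrow> complex \<times> complex" where
  "In d = (THE p. is_input d (fst p) (snd p))"

text \<open>Components at In(x): True means R(D), False means L(D).\<close>
definition in_comps :: "xdata \<Rightarrow> bool \<times> bool" where
  "in_comps d = (fst (In d) = roff1 d, snd (In d) = roff2 d)"

definition xsign :: "xdata \<Rightarrow> complex" where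
  "xsign d = (let c1 = fst (in_comps d); c2 = snd (in_comps d);
                  co = (if over1 d then c1 else c2); cu = (if over1 d then c2 else c1)
              in if co \<and> \<not> cu then 1
                 else if \<not> co \<and> cu then -1
                 else if co then \<i> else - \<i>)"

definition type1 :: "xdata \<Rightarrow> bool" where
  "type1 d \<longleftrightarrow> fst (in_comps d) \<noteq> snd (in_comps d)"

definition type2 :: "xdata \<Rightarrow> bool" where
  "type2 d \<longleftrightarrow> fst (in_comps d) = snd (in_comps d)"

definition crossing_change :: "xdata \<Rightarrow> xdata" where
  "crossing_change d = d\<lparr>over1 := \<not> over1 d\<rparr>"

text \<open>Reversing the orientation of D: both branches are traversed backwards;
the strands (as point sets) and their component labels are unchanged.\<close>
definition reverse :: "xdata \<Rightarrow> xdata" where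
  "reverse d = d\<lparr>dir1 := - dir1 d, dir2 := - dir2 d\<rparr>"

text \<open>Relabeling D^2: R and L swap, i.e. on each branch the other strand is R.\<close>
definition relabel :: "xdata \<Rightarrow> xdata" where
  "relabel d = d\<lparr>roff1 := - roff1 d, roff2 := - roff2 d\<rparr>"

end

theory Submission
  imports Defs
begin

lemma linsolve:
  fixes a1 a2 b1 b2 t1 t2 u1 u2 :: real
  assumes c: "a1 * b2 - a2 * b1 \<noteq> 0"
  shows "(t1 * a1 - t2 * b1 = u1 \<and> t1 * a2 - t2 * b2 = u2) \<longleftrightarrow>
     (t1 = (b2 * u1 - b1 * u2) / (a1 * b2 - a2 * b1) \<and> t2 = (a2 * u1 - a1 * u2) / (a1 * b2 - a2 * b1))"
proof
  assume h: "t1 * a1 - t2 * b1 = u1 \<and> t1 * a2 - t2 * b2 = u2"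
  have u1: "u1 = t1 * a1 - t2 * b1" and u2: "u2 = t1 * a2 - t2 * b2" using h by auto
  have "t1 * (a1 * b2 - a2 * b1) = b2 * u1 - b1 * u2" unfolding u1 u2 by (simp add: algebra_simps)
  moreover have "t2 * (a1 * b2 - a2 * b1) = a2 * u1 - a1 * u2" unfolding u1 u2 by (simp add: algebra_simps)
  ultimately show "t1 = (b2 * u1 - b1 * u2) / (a1 * b2 - a2 * b1) \<and> t2 = (a2 * u1 - a1 * u2) / (a1 * b2 - a2 * b1)"
    using c by (simp add: field_simps)
next
  assume h: "t1 = (b2 * u1 - b1 * u2) / (a1 * b2 - a2 * b1) \<and> t2 = (a2 * u1 - a1 * u2) / (a1 * b2 - a2 * b1)"
  then have h1: "t1 * (a1 * b2 - a2 * b1) = b2 * u1 - b1 * u2" and h2: "t2 * (a1 * b2 - a2 * b1) = a2 * u1 - a1 * u2"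
    using c by auto
  have "(t1 * a1 - t2 * b1) * (a1 * b2 - a2 * b1) = a1 * (t1 * (a1 * b2 - a2 * b1)) - b1 * (t2 * (a1 * b2 - a2 * b1))"
    by algebra
  also have "\<dots> = a1 * (b2 * u1 - b1 * u2) - b1 * (a2 * u1 - a1 * u2)" by (simp only: h1 h2)
  also have "\<dots> = u1 * (a1 * b2 - a2 * b1)" by algebra
  finally have e1: "(t1 * a1 - t2 * b1) * (a1 * b2 - a2 * b1) = u1 * (a1 * b2 - a2 * b1)" .
  have "(t1 * a2 - t2 * b2) * (a1 * b2 - a2 * b1) = a2 * (t1 * (a1 * b2 - a2 * b1)) - b2 * (t2 * (a1 * b2 - a2 * b1))"
    by algebra
  also have "\<dots> = a2 * (b2 * u1 - b1 * u2) - b2 * (a2 * u1 - a1 * u2)" by (simp only: h1 h2)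
  also have "\<dots> = u2 * (a1 * b2 - a2 * b1)" by algebra
  finally have e2: "(t1 * a2 - t2 * b2) * (a1 * b2 - a2 * b1) = u2 * (a1 * b2 - a2 * b1)" .
  show "t1 * a1 - t2 * b1 = u1 \<and> t1 * a2 - t2 * b2 = u2" using c e1 e2 by simp
qed

definition cc :: "xdata \<Rightarrow> real" where "cc d = Im (cnj (dir1 d) * dir2 d)"
definition T1 :: "xdata \<Rightarrow> real \<Rightarrow> real \<Rightarrow> real" where
 "T1 d s1 s2 = width d * (s1 * Re (cnj (dir1 d) * dir2 d) - s2 * (Re (dir2 d)^2 + Im (dir2 d)^2)) / cc d"
definition T2 :: "xdata \<Rightarrow> real \<Rightarrow> real \<Rightarrow> real" where
 "T2 d s1 s2 = width d * (s1 * (Re (dir1 d)^2 + Im (dir1 d)^2) - s2 * Re (cnj (dir1 d) * dir2 d)) / cc d"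

lemma meets_iff:
  assumes "cc d \<noteq> 0"
  shows "meets d (of_real s1 * (of_real (width d) * \<i> * dir1 d)) (of_real s2 * (of_real (width d) * \<i> * dir2 d)) t1 t2
     \<longleftrightarrow> t1 = T1 d s1 s2 \<and> t2 = T2 d s1 s2"
proof -
  obtain a1 a2 where a: "dir1 d = Complex a1 a2" by (cases "dir1 d") auto
  obtain b1 b2 where b: "dir2 d = Complex b1 b2" by (cases "dir2 d") auto
  define w where "w = width d"
  have c: "a1 * b2 - a2 * b1 \<noteq> 0" using assms by (simp add: cc_def a b)
  have "meets d (of_real s1 * (of_real (width d) * \<i> * dir1 d)) (of_real s2 * (of_real (width d) * \<i> * dir2 d)) t1 t2
     \<longleftrightarrow> (t1 * a1 - t2 * b1 = s1*w*a2 - s2*w*b2 \<and> t1 * a2 - t2 * b2 = s2*w*b1 - s1*w*a1)"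
    by (simp add: meets_def a b complex_eq_iff w_def algebra_simps)
  also have "\<dots> \<longleftrightarrow> t1 = (b2 * (s1*w*a2 - s2*w*b2) - b1 * (s2*w*b1 - s1*w*a1)) / (a1 * b2 - a2 * b1)
        \<and> t2 = (a2 * (s1*w*a2 - s2*w*b2) - a1 * (s2*w*b1 - s1*w*a1)) / (a1 * b2 - a2 * b1)"
    by (rule linsolve[OF c])
  also have "\<dots> \<longleftrightarrow> t1 = T1 d s1 s2 \<and> t2 = T2 d s1 s2"
    by (simp add: T1_def T2_def cc_def a b w_def algebra_simps power2_eq_square)
  finally show ?thesis .
qed

definition AA :: "xdata \<Rightarrow> complex" where "AA d = of_real (width d) * \<i> * dir1 d"
definition BB :: "xdata \<Rightarrow> complex" where "BB d = of_real (width d) * \<i> * dir2 d"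
definition sg :: "xdata \<Rightarrow> real" where "sg d = (if cc d > 0 then 1 else -1)"

lemma valid_facts:
  assumes "valid d"
  shows "cc d \<noteq> 0" "width d > 0" "Re (dir1 d)^2 + Im (dir1 d)^2 > 0" "Re (dir2 d)^2 + Im (dir2 d)^2 > 0"
    "AA d \<noteq> - AA d" "BB d \<noteq> - BB d"
    "offs1 d = {of_real 1 * AA d, of_real (-1) * AA d}" "offs2 d = {of_real 1 * BB d, of_real (-1) * BB d}"
proof -
  show c: "cc d \<noteq> 0" "width d > 0" using assms by (auto simp: valid_def cc_def)
  then have a: "dir1 d \<noteq> 0" and b: "dir2 d \<noteq> 0" by (auto simp: cc_def)
  show "Re (dir1 d)^2 + Im (dir1 d)^2 > 0" using a
    by (metis complex_eq_0 le_less sum_power2_ge_zero)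
  show "Re (dir2 d)^2 + Im (dir2 d)^2 > 0" using b
    by (metis complex_eq_0 le_less sum_power2_ge_zero)
  show "AA d \<noteq> - AA d" "BB d \<noteq> - BB d" using a b c by (auto simp: AA_def BB_def)
  show "offs1 d = {of_real 1 * AA d, of_real (-1) * AA d}" "offs2 d = {of_real 1 * BB d, of_real (-1) * BB d}"
    by (auto simp: offs1_def offs2_def AA_def BB_def)
qed

lemma T1_diff: "cc d \<noteq> 0 \<Longrightarrow> T1 d s1 s2' - T1 d s1 s2 = width d * (s2 - s2') * (Re (dir2 d)^2 + Im (dir2 d)^2) / cc d"
  by (simp add: T1_def diff_divide_distrib[symmetric] algebra_simps)
lemma T2_diff: "cc d \<noteq> 0 \<Longrightarrow> T2 d s1' s2 - T2 d s1 s2 = width d * (s1' - s1) * (Re (dir1 d)^2 + Im (dir1 d)^2) / cc d"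
  by (simp add: T2_def diff_divide_distrib[symmetric] algebra_simps)

lemma sign_lem:
  fixes w k N c :: real
  assumes "w > 0" "N > 0" "c \<noteq> 0"
  shows "0 \<le> w * k * N / c \<longleftrightarrow> 0 \<le> k * c"
proof -
  have "w * k * N / c = (w * N) * (k / c)" by (simp add: algebra_simps)
  moreover have "0 \<le> (w * N) * (k / c) \<longleftrightarrow> 0 \<le> k / c"
  proof -
    have p: "w * N > 0" using assms by simp
    show ?thesis using zero_le_mult_iff[of "w*N" "k/c"] p by linarith
  qed
  moreover have "0 \<le> k / c \<longleftrightarrow> 0 \<le> k * c" by (simp add: zero_le_divide_iff zero_le_mult_iff)
  ultimately show ?thesis by (metis (no_types))
qed

lemma is_input_signs:
  assumes v: "valid d" and s1: "s1 \<in> {1, -1}" and s2: "s2 \<in> {1,-1}"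
  shows "is_input d (of_real s1 * AA d) (of_real s2 * BB d) \<longleftrightarrow> s1 = - sg d \<and> s2 = sg d"
proof -
  note f = valid_facts[OF v]
  have m: "meets d (of_real x * AA d) (of_real y * BB d) t1 t2 \<longleftrightarrow> t1 = T1 d x y \<and> t2 = T2 d x y" for x y t1 t2
    using meets_iff[OF f(1)] unfolding AA_def BB_def .
  have "is_input d (of_real s1 * AA d) (of_real s2 * BB d) \<longleftrightarrow>
     (\<forall>s2'\<in>{1,-1}. 0 \<le> T1 d s1 s2' - T1 d s1 s2) \<and> (\<forall>s1'\<in>{1,-1}. 0 \<le> T2 d s1' s2 - T2 d s1 s2)"
  proof -
    have o1: "offs1 d = (\<lambda>s. of_real s * AA d) ` {1,-1}" and o2: "offs2 d = (\<lambda>s. of_real s * BB d) ` {1,-1}"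
      unfolding f(7,8) by auto
    have i1: "of_real s1 * AA d \<in> offs1 d" "of_real s2 * BB d \<in> offs2 d" unfolding o1 o2 using s1 s2 by auto
    show ?thesis unfolding is_input_def
      apply (simp only: i1 simp_thms)
      apply (simp only: o1 o2 ball_simps Ball_image_comp comp_def m)
      by simp
  qed
  also have "\<dots> \<longleftrightarrow> s1 = - sg d \<and> s2 = sg d"
  proof -
    have cs: "cc d > 0 \<or> cc d < 0" using f(1) by linarith
    have s1': "s1 = 1 \<or> s1 = -1" and s2': "s2 = 1 \<or> s2 = -1" using s1 s2 by auto
    show ?thesis
      unfolding T1_diff[OF f(1)] T2_diff[OF f(1)] sign_lem[OF f(2) f(3) f(1)] sign_lem[OF f(2) f(4) f(1)]
      using cs s1' s2' by (elim disjE) (simp_all add: sg_def zero_le_mult_iff)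
  qed
  finally show ?thesis .
qed

lemma In_eq:
  assumes v: "valid d"
  shows "In d = (of_real (- sg d) * AA d, of_real (sg d) * BB d)"
proof -
  note f = valid_facts[OF v]
  have sgm: "sg d \<in> {1,-1}" "- sg d \<in> {1,-1}" by (auto simp: sg_def)
  have key: "is_input d (fst p) (snd p) \<longleftrightarrow> p = (of_real (- sg d) * AA d, of_real (sg d) * BB d)" for p
  proof
    assume h: "is_input d (fst p) (snd p)"
    then have "fst p \<in> offs1 d" "snd p \<in> offs2 d" by (simp_all only: is_input_def)
    then obtain s1 s2 where s: "s1 \<in> {1,-1}" "s2 \<in> {1,-1}" and o: "fst p = of_real s1 * AA d" "snd p = of_real s2 * BB d"
      unfolding f(7,8) by blast
    have "s1 = - sg d \<and> s2 = sg d" using is_input_signs[OF v s] h unfolding o by blast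
    then show "p = (of_real (- sg d) * AA d, of_real (sg d) * BB d)"
      using o by (metis prod.collapse)
  next
    assume "p = (of_real (- sg d) * AA d, of_real (sg d) * BB d)"
    then show "is_input d (fst p) (snd p)" using is_input_signs[OF v sgm(2) sgm(1)] by simp
  qed
  show ?thesis unfolding In_def
    by (rule the_equality) (simp_all only: key)
qed

lemma In_cc: "In (crossing_change d) = In d"
  by (simp add: In_def is_input_def meets_def offs1_def offs2_def crossing_change_def)
lemma In_relabel: "In (relabel d) = In d"
  by (simp add: In_def is_input_def meets_def offs1_def offs2_def relabel_def)

lemma valid_reverse: "valid d \<Longrightarrow> valid (reverse d)"
  by (auto simp: valid_def reverse_def offs1_def offs2_def)

lemma In_reverse: assumes "valid d" shows "In (reverse d) = (- fst (In d), - snd (In d))"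
proof -
  have "sg (reverse d) = sg d" "AA (reverse d) = - AA d" "BB (reverse d) = - BB d"
    by (auto simp: sg_def cc_def AA_def BB_def reverse_def)
  then show ?thesis using In_eq[OF assms] In_eq[OF valid_reverse[OF assms]] by simp
qed

lemma flip_lem: "x \<in> {A, - A} \<Longrightarrow> r \<in> {A, - A} \<Longrightarrow> A \<noteq> - (A::complex) \<Longrightarrow> (- x = r) \<longleftrightarrow> \<not> (x = r)"
  by auto
lemma flip_lem2: "x \<in> {A, - A} \<Longrightarrow> r \<in> {A, - A} \<Longrightarrow> A \<noteq> - (A::complex) \<Longrightarrow> (x = - r) \<longleftrightarrow> \<not> (x = r)"
  by auto

lemma in_comps_facts:
  assumes v: "valid d"
  shows "in_comps (crossing_change d) = in_comps d"
    "in_comps (relabel d) = (\<not> fst (in_comps d), \<not> snd (in_comps d))"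
    "in_comps (reverse d) = (\<not> fst (in_comps d), \<not> snd (in_comps d))"
    "over1 (crossing_change d) = (\<not> over1 d)" "over1 (relabel d) = over1 d" "over1 (reverse d) = over1 d"
proof -
  note f = valid_facts[OF v]
  have sgm: "sg d = 1 \<or> sg d = -1" by (auto simp: sg_def)
  have x1: "fst (In d) \<in> {AA d, - AA d}" and x2: "snd (In d) \<in> {BB d, - BB d}"
    using In_eq[OF v] sgm by auto
  have r1: "roff1 d \<in> {AA d, - AA d}" and r2: "roff2 d \<in> {BB d, - BB d}"
    using v f(7,8) by (auto simp: valid_def)
  show "in_comps (crossing_change d) = in_comps d"
    by (simp add: in_comps_def In_cc) (simp add: crossing_change_def)
  show "in_comps (relabel d) = (\<not> fst (in_comps d), \<not> snd (in_comps d))"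
    unfolding in_comps_def In_relabel using flip_lem2[OF x1 r1 f(5)] flip_lem2[OF x2 r2 f(6)]
    by (simp add: relabel_def)
  show "in_comps (reverse d) = (\<not> fst (in_comps d), \<not> snd (in_comps d))"
    unfolding in_comps_def In_reverse[OF v] using flip_lem[OF x1 r1 f(5)] flip_lem[OF x2 r2 f(6)]
    by (simp add: reverse_def)
  show "over1 (crossing_change d) = (\<not> over1 d)" "over1 (relabel d) = over1 d" "over1 (reverse d) = over1 d"
    by (auto simp: crossing_change_def relabel_def reverse_def)
qed

theorem lemma1:
  assumes "valid d"
  shows "(type1 d \<longrightarrow>
            xsign (crossing_change d) = - xsign d \<and>
            xsign (reverse d) = - xsign d \<and>
            xsign (relabel d) = - xsign d)
       \<and> (type2 d \<longrightarrow>
            xsign (crossing_change d) = xsign d \<and>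
            xsign (relabel d) = - xsign d \<and>
            xsign (reverse d) = - xsign d)"
  using in_comps_facts[OF assms]
  unfolding type1_def type2_def xsign_def Let_def
  by (cases "in_comps d"; cases "over1 d"; auto)
end
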